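(* Let $Q$ be a countable set, $(F_i)_{i\in I}$ a family of real-valued maps on $Q$ and $(k_i)_{i\in I}$ a bounded family of nonnegative real numbers such that $\sum_{t\in S}|F_i(t)|\le k_i\mod c_0(I)$ for every finite subset $S$ of $Q$. Then $(F_i)_{i\in I}$ is of type $c_0\ell_1$ bounded by $(k_i)_{i\in I}$.
   Context: $c_0(I)$ is the set of real families $(a_i)_{i\in I}$ with $\{i:|a_i|\ge\varepsilon\}$ finite for all $\varepsilon>0$ (written $\lim_{i\in I}a_i=0$). "$x_i\le y_i\mod c_0(I)$" means there is $(z_i)\in c_0(I)$ with $x_i\le y_i+z_i$ for all $i$, i.e. $\{i:x_i\ge y_i+\varepsilon\}$ is finite for every $\varepsilon>0$. $(F_i)_{i\in I}$ is of type $c_0\ell_1$ bounded by $(k_i)$ if $F_i(t)=a_{i,t}+b_{i,t}$ for $i\in I$, $t\in Q$, with $\lim_{i\in I}a_{i,t}=0$ for each $t\in Q$ and $\sum_{t\in Q}|b_{i,t}|\le k_i$ for each $i\in I$. *)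

theory Defs
  imports "HOL-Analysis.Analysis"
begin

definition c0_lim :: "'i set \<Rightarrow> ('i \<Rightarrow> real) \<Rightarrow> bool" where
  "c0_lim I a \<longleftrightarrow> (\<forall>\<epsilon>>0. finite {i\<in>I. \<epsilon> \<le> \<bar>a i\<bar>})"

definition le_mod_c0 :: "'i set \<Rightarrow> ('i \<Rightarrow> real) \<Rightarrow> ('i \<Rightarrow> real) \<Rightarrow> bool" where
  "le_mod_c0 I x y \<longleftrightarrow> (\<exists>z. c0_lim I z \<and> (\<forall>i\<in>I. x i \<le> y i + z i))"

definition c0l1_bounded ::
  "'i set \<Rightarrow> 'q set \<Rightarrow> ('i \<Rightarrow> 'q \<Rightarrow> real) \<Rightarrow> ('i \<Rightarrow> real) \<Rightarrow> bool" where
  "c0l1_bounded I Q F k \<longleftrightarrow>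
     (\<exists>a b. (\<forall>i\<in>I. \<forall>t\<in>Q. F i t = a i t + b i t)
          \<and> (\<forall>t\<in>Q. c0_lim I (\<lambda>i. a i t))
          \<and> (\<forall>i\<in>I. (\<lambda>t. \<bar>b i t\<bar>) summable_on Q \<and> (\<Sum>\<^sub>\<infinity>t\<in>Q. \<bar>b i t\<bar>) \<le> k i))"

end

theory Submission
  imports Defs
begin

lemma greedy_sum:
  fixes g :: "nat \<Rightarrow> real"
  assumes "\<And>m. g m \<ge> 0" "k \<ge> 0"
  shows "(\<Sum>m<n. min (g m) (max 0 (k - (\<Sum>j<m. g j)))) = min k (\<Sum>m<n. g m)"
proof (induction n)
  case 0 then show ?case using assms by simp
next
  case (Suc n)
  have P: "(\<Sum>m<n. g m) \<ge> 0" using assms by (simp add: sum_nonneg)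
  show ?case using Suc P assms(1)[of n] by (simp add: min_def max_def)
qed

theorem proposition2p11:
  fixes I :: "'i set" and Q :: "'q set"
    and F :: "'i \<Rightarrow> 'q \<Rightarrow> real" and k :: "'i \<Rightarrow> real"
  assumes "countable Q"
    and "\<exists>M. \<forall>i\<in>I. \<bar>k i\<bar> \<le> M"
    and "\<forall>i\<in>I. 0 \<le> k i"
    and "\<And>S. finite S \<Longrightarrow> S \<subseteq> Q \<Longrightarrow> le_mod_c0 I (\<lambda>i. \<Sum>t\<in>S. \<bar>F i t\<bar>) k"
  shows "c0l1_bounded I Q F k"
proof -
  define N where "N = to_nat_on Q"
  define g where "g i m = (if m \<in> N ` Q then \<bar>F i (from_nat_into Q m)\<bar> else 0)" for i m
  define R where "R i m = max 0 (k i - (\<Sum>j<m. g i j))" for i m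
  define c where "c i m = min (g i m) (R i m)" for i m
  define b where "b i t = max (- R i (N t)) (min (R i (N t)) (F i t))" for i t
  define a where "a i t = F i t - b i t" for i t
  have injN: "inj_on N Q" using assms(1) unfolding N_def by (rule inj_on_to_nat_on)
  have gnn: "g i m \<ge> 0" for i m by (simp add: g_def)
  have Rnn: "R i m \<ge> 0" for i m by (simp add: R_def)
  have gN: "g i (N t) = \<bar>F i t\<bar>" if "t \<in> Q" for i t
    using that assms(1) by (simp add: g_def N_def)
  have absb: "\<bar>b i t\<bar> = c i (N t)" if "t \<in> Q" for i t
    using gN[OF that, of i] Rnn[of i "N t"] by (auto simp: b_def c_def min_def max_def)
  have absa: "\<bar>a i t\<bar> = max 0 (\<bar>F i t\<bar> - R i (N t))" for i t
    using Rnn[of i "N t"] by (auto simp: a_def b_def min_def max_def)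
  have partial: "(\<Sum>j\<le>n. g i j) = (\<Sum>s\<in>{s\<in>Q. N s \<le> n}. \<bar>F i s\<bar>)"
    and finS: "finite {s\<in>Q. N s \<le> n}" for i n
  proof -
    let ?S = "{s\<in>Q. N s \<le> n}"
    have inj: "inj_on N ?S" using injN by (rule inj_on_subset) auto
    have img: "N ` ?S \<subseteq> {..n}" by auto
    show fin: "finite ?S" using inj img finite_subset[OF img] by (metis finite_imageD finite_atMost finite_subset)
    have "(\<Sum>s\<in>?S. \<bar>F i s\<bar>) = (\<Sum>s\<in>?S. g i (N s))" using gN by simp
    also have "\<dots> = (\<Sum>j\<in>N ` ?S. g i j)" using sum.reindex[OF inj, of "g i"] by simp
    also have "\<dots> = (\<Sum>j\<le>n. g i j)"
    proof (rule sum.mono_neutral_left)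
      show "finite {..n}" by simp
      show "N ` ?S \<subseteq> {..n}" by (rule img)
      show "\<forall>j\<in>{..n} - N ` ?S. g i j = 0" by (auto simp: g_def)
    qed
    finally show "(\<Sum>j\<le>n. g i j) = (\<Sum>s\<in>?S. \<bar>F i s\<bar>)" by simp
  qed
  have A: "\<forall>t\<in>Q. c0_lim I (\<lambda>i. a i t)"
  proof
    fix t assume t: "t \<in> Q"
    let ?S = "{s\<in>Q. N s \<le> N t}"
    obtain z where z: "c0_lim I z" "\<forall>i\<in>I. (\<Sum>s\<in>?S. \<bar>F i s\<bar>) \<le> k i + z i"
      using assms(4)[OF finS[of "N t"]] unfolding le_mod_c0_def by auto
    have bound: "\<bar>a i t\<bar> \<le> max 0 (z i)" if "i \<in> I" for i
    proof -
      have "(\<Sum>j\<le>N t. g i j) = (\<Sum>j<N t. g i j) + \<bar>F i t\<bar>"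
        using gN[OF t] by (simp add: lessThan_Suc_atMost[symmetric])
      then have "(\<Sum>j<N t. g i j) + \<bar>F i t\<bar> \<le> k i + z i"
        using z(2) that partial[of i "N t"] by auto
      then show ?thesis using absa[of i t] abs_ge_zero[of "F i t"] unfolding R_def by (smt (verit))
    qed
    show "c0_lim I (\<lambda>i. a i t)" unfolding c0_lim_def
    proof (intro allI impI)
      fix e :: real assume e: "e > 0"
      have "{i\<in>I. e \<le> \<bar>a i t\<bar>} \<subseteq> {i\<in>I. e \<le> \<bar>z i\<bar>}"
        using bound e by (force simp: max_def split: if_splits)
      then show "finite {i\<in>I. e \<le> \<bar>a i t\<bar>}"
        using z(1) e unfolding c0_lim_def by (meson finite_subset)
    qed
  qed
  have B: "(\<lambda>t. \<bar>b i t\<bar>) summable_on Q \<and> (\<Sum>\<^sub>\<infinity>t\<in>Q. \<bar>b i t\<bar>) \<le> k i" if i: "i \<in> I" for i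
  proof -
    have fs: "(\<Sum>t\<in>T. \<bar>b i t\<bar>) \<le> k i" if T: "finite T" "T \<subseteq> Q" for T
    proof -
      have inj: "inj_on N T" using injN T(2) by (rule inj_on_subset)
      obtain n where n: "N ` T \<subseteq> {..<n}"
        using T(1) by (meson finite_imageI finite_nat_iff_bounded)
      have "(\<Sum>t\<in>T. \<bar>b i t\<bar>) = (\<Sum>t\<in>T. c i (N t))" using absb T(2) by (simp add: subset_iff)
      also have "\<dots> = (\<Sum>j\<in>N ` T. c i j)" using sum.reindex[OF inj, of "c i"] by simp
      also have "\<dots> \<le> (\<Sum>j<n. c i j)"
        by (rule sum_mono2) (use n gnn Rnn in \<open>auto simp: c_def\<close>)
      also have "\<dots> = min (k i) (\<Sum>m<n. g i m)"
        unfolding c_def R_def using greedy_sum[of "g i" "k i" n] gnn assms(3) i by simp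
      also have "\<dots> \<le> k i" by simp
      finally show ?thesis .
    qed
    have sm: "(\<lambda>t. \<bar>b i t\<bar>) summable_on Q"
      by (rule nonneg_bdd_above_summable_on) (use fs in \<open>auto simp: bdd_above_def\<close>)
    show ?thesis using sm infsum_le_finite_sums[OF sm fs] by simp
  qed
  show ?thesis unfolding c0l1_bounded_def
    by (rule exI[of _ a], rule exI[of _ b]) (use A B in \<open>auto simp: a_def\<close>)
qed

end
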